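(* Let $X$ be a topological quandle and let $\{X_\alpha\}$ be the decomposition of $X$ into its path components. Then $H_n(X)\cong\bigoplus_\alpha H_n(X_\alpha)$ for every $n$, where $H_n(X_\alpha)$ is the homology of the subcomplex of $C_*(X)$ spanned by singular simplices with image in $X_\alpha$.
   Context: A quandle is a set with a binary operation $\triangleright$ such that $x\triangleright x=x$, each $\beta_y(x)=x\triangleright y$ is bijective, and $(x\triangleright y)\triangleright z=(x\triangleright z)\triangleright(y\triangleright z)$. A topological quandle is a topological space with a continuous quandle operation such that every $\beta_y$ is a homeomorphism. Let $\Delta^n$ have vertices $e_0,\dots,e_n$ ($\Delta^{n-1}$ has vertices $\bar e_0,\dots,\bar e_{n-1}$). For a singular $n$-simplex $\sigma:\Delta^n\to X$ write $\sigma=\sigma_{[x_1,\dots,x_{n+1}]}$ with $x_i=\sigma(e_{i-1})$; singular simplices are combined pointwise by $(\sigma\triangleright\tau)(t)=\sigma(t)\triangleright\tau(t)$. $C_n(X)$ is the free abelian group on singular $n$-simplices. For $2\le i\le n+1$, $d_i\sigma$ is $\sigma$ restricted to the face omitting $e_{i-1}$ (via $\bar e_j\mapsto e_j$ for $j\le i-2$, $\bar e_j\mapsto e_{j+1}$ for $j\ge i-1$), and $s_i\sigma=\sigma\circ\iota_i$ with $\iota_i(\sum t_j\bar e_j)=(\sum_{k=0}^{i-2}t_k)e_{i-1}+\sum_{j=i-1}^{n-1}t_je_{j+1}$. The boundary is $\partial_n\sigma=\sum_{i=2}^{n+1}(-1)^i(d_i\sigma-d_i\sigma\triangleright s_i\sigma)$,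 extended linearly ($\partial_0=0$); $H_n(X)$ is the $n$-th homology of $(C_*(X),\partial)$. *)

theory Defs
  imports "HOL-Homology.Homology" "HOL-Algebra.Product_Groups"
begin

definition quandle_on :: "'a set \<Rightarrow> ('a \<Rightarrow> 'a \<Rightarrow> 'a) \<Rightarrow> bool" where
  "quandle_on S tr \<equiv>
     (\<forall>x\<in>S. \<forall>y\<in>S. tr x y \<in> S)
   \<and> (\<forall>x\<in>S. tr x x = x)
   \<and> (\<forall>y\<in>S. bij_betw (\<lambda>x. tr x y) S S)
   \<and> (\<forall>x\<in>S. \<forall>y\<in>S. \<forall>z\<in>S. tr (tr x y) z = tr (tr x z) (tr y z))"

definition topological_quandle :: "'a topology \<Rightarrow> ('a \<Rightarrow> 'a \<Rightarrow> 'a) \<Rightarrow> bool" where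
  "topological_quandle X tr \<equiv>
     quandle_on (topspace X) tr
   \<and> continuous_map (prod_topology X X) X (\<lambda>(x, y). tr x y)
   \<and> (\<forall>y\<in>topspace X. homeomorphic_map X X (\<lambda>x. tr x y))"

text \<open>The map iota_i : Delta^{n-1} -> Delta^n, with k = i - 1 (so 1 <= k <= n):
  coordinates l < k are 0, coordinate k collects t_0 + ... + t_{k-1},
  coordinate l > k is t_{l-1}.\<close>
definition qdegen_map :: "nat \<Rightarrow> (nat \<Rightarrow> real) \<Rightarrow> nat \<Rightarrow> real" where
  "qdegen_map k x \<equiv> \<lambda>l. if l < k then 0 else if l = k then sum x {..<k} else x (l - 1)"

definition qdegen :: "nat \<Rightarrow> nat \<Rightarrow> ((nat \<Rightarrow> real) \<Rightarrow> 'a) \<Rightarrow> (nat \<Rightarrow> real) \<Rightarrow> 'a" where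
  "qdegen n k f \<equiv> restrict (f \<circ> qdegen_map k) (standard_simplex (n - 1))"

definition qsimplex_op :: "('a \<Rightarrow> 'a \<Rightarrow> 'a) \<Rightarrow> nat \<Rightarrow> ((nat \<Rightarrow> real) \<Rightarrow> 'a)
     \<Rightarrow> ((nat \<Rightarrow> real) \<Rightarrow> 'a) \<Rightarrow> (nat \<Rightarrow> real) \<Rightarrow> 'a" where
  "qsimplex_op tr m f g \<equiv> restrict (\<lambda>t. tr (f t) (g t)) (standard_simplex m)"

text \<open>Boundary of a singular n-simplex: sum over i = 2..n+1, i.e. k = i-1 in {1..n},
  of (-1)^i (d_i sigma - d_i sigma \<triangleright> s_i sigma). Here d_i sigma = singular_face n (i-1) sigma.\<close>
definition qboundary_simplex :: "('a \<Rightarrow> 'a \<Rightarrow> 'a) \<Rightarrow> nat \<Rightarrow> ((nat \<Rightarrow> real) \<Rightarrow> 'a) \<Rightarrow> 'a chain" where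
  "qboundary_simplex tr n f \<equiv>
     (\<Sum>k\<in>{1..n}. frag_cmul ((-1) ^ (k + 1))
        (frag_of (singular_face n k f)
         - frag_of (qsimplex_op tr (n - 1) (singular_face n k f) (qdegen n k f))))"

definition qboundary :: "('a \<Rightarrow> 'a \<Rightarrow> 'a) \<Rightarrow> nat \<Rightarrow> 'a chain \<Rightarrow> 'a chain" where
  "qboundary tr n c \<equiv> frag_extend (qboundary_simplex tr n) c"

definition qcycle_group :: "('a \<Rightarrow> 'a \<Rightarrow> 'a) \<Rightarrow> nat \<Rightarrow> 'a topology \<Rightarrow> 'a chain monoid" where
  "qcycle_group tr n X \<equiv>
     subgroup_generated (chain_group n X) {c \<in> singular_chain_set n X. qboundary tr n c = 0}"

definition qboundary_set :: "('a \<Rightarrow> 'a \<Rightarrow> 'a) \<Rightarrow> nat \<Rightarrow> 'a topology \<Rightarrow> 'a chain set" where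
  "qboundary_set tr n X \<equiv> qboundary tr (Suc n) ` singular_chain_set (Suc n) X"

text \<open>Quandle homology H_n: cycles modulo boundaries. Applied to subtopology X C this is the
  homology of the subcomplex spanned by singular simplices with image in C.\<close>
definition qhomology_group :: "('a \<Rightarrow> 'a \<Rightarrow> 'a) \<Rightarrow> nat \<Rightarrow> 'a topology \<Rightarrow> 'a chain set monoid" where
  "qhomology_group tr n X \<equiv> qcycle_group tr n X Mod qboundary_set tr n X"

end

theory Submission
  imports Defs
begin

lemma tr_cont_comp:
  assumes q: "topological_quandle X tr"
    and f: "continuous_map Y X f" and g: "continuous_map Y X g"
  shows "continuous_map Y X (\<lambda>t. tr (f t) (g t))"
proof -
  have cont: "continuous_map (prod_topology X X) X (\<lambda>(x, y). tr x y)"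
    using q by (simp add: topological_quandle_def)
  have "continuous_map Y (prod_topology X X) (\<lambda>t. (f t, g t))"
    using f g by (simp add: continuous_map_pairwise o_def)
  from continuous_map_compose[OF this cont] show ?thesis by (simp add: o_def)
qed

lemma quandle_tr_in_component:
  assumes q: "topological_quandle X tr" and S: "S \<in> path_components_of X"
    and a: "a \<in> S" and b: "b \<in> S"
  shows "tr a b \<in> S"
proof -
  have aX: "a \<in> topspace X" using S a path_components_of_subset by blast
  have Seq: "S = path_component_of_set X a"
    using S a by (auto simp: path_components_of_def path_component_of_equiv)
  then have "path_component_of X a b" using b by simp
  then obtain g where g: "pathin X g" "g 0 = a" "g 1 = b"
    by (auto simp: path_component_of_def)
  have "pathin X (\<lambda>s. tr a (g s))"
    unfolding pathin_def
    by (rule tr_cont_comp[OF q]) (use g aX in \<open>auto simp: pathin_def\<close>)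
  moreover have "tr a a = a"
    using q aX by (simp add: topological_quandle_def quandle_on_def)
  ultimately have "path_component_of X a (tr a b)"
    unfolding path_component_of_def using g by (rule_tac x="\<lambda>s. tr a (g s)" in exI) auto
  then show ?thesis using Seq by simp
qed

lemma qdegen_map_in_simplex:
  assumes k: "1 \<le> k" "k \<le> m" and x: "x \<in> standard_simplex (m - 1)"
  shows "qdegen_map k x \<in> standard_simplex m"
proof -
  obtain p where m: "m = Suc p" using k by (cases m) auto
  have x01: "\<And>i. 0 \<le> x i \<and> x i \<le> 1" and x0: "\<And>i. i > p \<Longrightarrow> x i = 0"
    and sx: "sum x {..p} = 1"
    using x m by (auto simp: standard_simplex_def)
  have s0: "0 \<le> sum x {..<k}" using x01 by (simp add: sum_nonneg)
  have "sum x {..<k} \<le> sum x {..p}"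
    by (rule sum_mono2) (use k m x01 in auto)
  then have s1: "sum x {..<k} \<le> 1" using sx by simp
  have e1: "sum (qdegen_map k x) {..Suc p} = sum (qdegen_map k x) {0..<k} + sum (qdegen_map k x) {k..<Suc (Suc p)}"
  proof -
    have "{..Suc p} = {0..<Suc (Suc p)}" by auto
    moreover have "sum (qdegen_map k x) {0..<k} + sum (qdegen_map k x) {k..<Suc (Suc p)} = sum (qdegen_map k x) {0..<Suc (Suc p)}"
      by (rule sum.atLeastLessThan_concat) (use k m in auto)
    ultimately show ?thesis by (simp only:)
  qed
  have e2: "sum (qdegen_map k x) {0..<k} = 0"
    by (simp add: qdegen_map_def)
  have e3: "sum (qdegen_map k x) {k..<Suc (Suc p)} = sum x {..<k} + sum (qdegen_map k x) {Suc k..<Suc (Suc p)}"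
    using k m by (subst sum.atLeast_Suc_lessThan) (auto simp: qdegen_map_def)
  have e4: "sum (qdegen_map k x) {Suc k..<Suc (Suc p)} = sum x {k..<Suc p}"
    unfolding sum.shift_bounds_Suc_ivl by (rule sum.cong) (auto simp: qdegen_map_def)
  have e5: "sum x {..<k} + sum x {k..<Suc p} = sum x {..p}"
  proof -
    have "{..p} = {0..<Suc p}" "{..<k} = {0..<k}" by auto
    moreover have "sum x {0..<k} + sum x {k..<Suc p} = sum x {0..<Suc p}"
      by (rule sum.atLeastLessThan_concat) (use k m in auto)
    ultimately show ?thesis by (simp only:)
  qed
  have "sum (qdegen_map k x) {..m} = 1"
    using e1 e2 e3 e4 e5 sx m by simp
  moreover have "\<forall>i. 0 \<le> qdegen_map k x i \<and> qdegen_map k x i \<le> 1"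
    using x01 s0 s1 by (simp add: qdegen_map_def)
  moreover have "\<forall>i>m. qdegen_map k x i = 0"
    using k m x0 by (auto simp: qdegen_map_def)
  ultimately show ?thesis by (simp add: standard_simplex_def)
qed

lemma qdegen_map_cont:
  assumes k: "1 \<le> k" "k \<le> m"
  shows "continuous_map (subtopology (powertop_real UNIV) (standard_simplex (m - 1)))
                        (subtopology (powertop_real UNIV) (standard_simplex m)) (qdegen_map k)"
proof (clarsimp simp add: continuous_map_in_subtopology qdegen_map_in_simplex[OF k] continuous_map_componentwise)
  fix i
  have "continuous_map (powertop_real UNIV) euclideanreal
          (\<lambda>x. if i < k then 0 else if i = k then sum x {..<k} else x (i - 1))"
    by (auto intro!: continuous_map_product_projection continuous_map_sum)
  then show "continuous_map (subtopology (powertop_real UNIV) (standard_simplex (m - Suc 0))) euclideanreal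
              (\<lambda>x. qdegen_map k x i)"
    by (simp add: qdegen_map_def continuous_map_from_subtopology)
qed

lemma qop_simplex:
  assumes q: "topological_quandle X tr" and S: "S \<in> path_components_of X"
    and f: "singular_simplex m (subtopology X S) f" and k: "1 \<le> k" "k \<le> m"
  shows "singular_simplex (m - 1) (subtopology X S)
           (qsimplex_op tr (m - 1) (singular_face m k f) (qdegen m k f))"
proof -
  let ?PT = "powertop_real UNIV"
  have fX: "singular_simplex m X f" and fS: "f ` standard_simplex m \<subseteq> S"
    using f by (auto simp: singular_simplex_subtopology)
  have c1: "continuous_map (subtopology ?PT (standard_simplex (m - 1))) X (singular_face m k f)"
    using singular_simplex_singular_face[OF fX] k by (simp add: singular_simplex_def)
  have c2: "continuous_map (subtopology ?PT (standard_simplex (m - 1))) X (f \<circ> qdegen_map k)"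
    using continuous_map_compose[OF qdegen_map_cont[OF k]] fX unfolding singular_simplex_def by blast
  have c3: "continuous_map (subtopology ?PT (standard_simplex (m - 1))) X
              (\<lambda>t. tr (singular_face m k f t) ((f \<circ> qdegen_map k) t))"
    by (rule tr_cont_comp[OF q c1 c2])
  have c4: "continuous_map (subtopology ?PT (standard_simplex (m - 1))) X
              (qsimplex_op tr (m - 1) (singular_face m k f) (qdegen m k f))"
    by (rule continuous_map_eq[OF c3]) (simp add: qsimplex_op_def qdegen_def)
  have img: "qsimplex_op tr (m - 1) (singular_face m k f) (qdegen m k f) ` standard_simplex (m - 1) \<subseteq> S"
  proof clarify
    fix t assume t: "t \<in> standard_simplex (m - 1)"
    have "singular_face m k f t \<in> S"
      using fS simplical_face_in_standard_simplex[of m k t] k t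
      by (auto simp: singular_face_def)
    moreover have "qdegen m k f t \<in> S"
      using fS qdegen_map_in_simplex[OF k t] t by (auto simp: qdegen_def)
    ultimately show "qsimplex_op tr (m - 1) (singular_face m k f) (qdegen m k f) t \<in> S"
      using quandle_tr_in_component[OF q S] t by (simp add: qsimplex_op_def)
  qed
  have e: "qsimplex_op tr (m - 1) (singular_face m k f) (qdegen m k f) \<in> extensional (standard_simplex (m - 1))"
    by (simp add: qsimplex_op_def)
  show ?thesis
    unfolding singular_simplex_subtopology
    unfolding singular_simplex_def
    by (intro conjI c4 e img)
qed

lemma qboundary_simplex_chain:
  assumes q: "topological_quandle X tr" and S: "S \<in> path_components_of X"
    and f: "singular_simplex m (subtopology X S) f"
  shows "singular_chain (m - 1) (subtopology X S) (qboundary_simplex tr m f)"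
  unfolding qboundary_simplex_def
proof (intro singular_chain_sum singular_chain_cmul singular_chain_diff)
  fix k assume k: "k \<in> {1..m}"
  then have k1: "1 \<le> k" "k \<le> m" by auto
  show "singular_chain (m - 1) (subtopology X S) (frag_of (singular_face m k f))"
    using singular_simplex_singular_face[OF f] k1 by (simp add: singular_chain_of)
  show "singular_chain (m - 1) (subtopology X S)
          (frag_of (qsimplex_op tr (m - 1) (singular_face m k f) (qdegen m k f)))"
    using qop_simplex[OF q S f k1] by (simp add: singular_chain_of)
qed

definition ee0 :: "nat \<Rightarrow> real" where "ee0 = (\<lambda>j. if j = 0 then 1 else 0)"

definition cproj :: "'a set \<Rightarrow> 'a chain \<Rightarrow> 'a chain" where
  "cproj S c = frag_extend (\<lambda>f. if f ee0 \<in> S then frag_of f else 0) c"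

lemma ee0_in [simp]: "ee0 \<in> standard_simplex p"
  by (simp add: ee0_def)

lemma comp_eq: "S \<in> path_components_of X \<Longrightarrow> x \<in> S \<Longrightarrow> S = path_component_of_set X x"
  by (auto simp: path_components_of_def path_component_of_equiv)

lemma simplex_in_comp:
  assumes f: "singular_simplex p X f" and S: "S \<in> path_components_of X" and fS: "f ee0 \<in> S"
  shows "singular_simplex p (subtopology X S) f"
proof -
  have cont: "continuous_map (subtopology (powertop_real UNIV) (standard_simplex p)) X f"
    using f by (simp add: singular_simplex_def)
  have "path_connectedin X (f ` standard_simplex p)"
    by (simp add: path_connectedin_subtopology path_connectedin_standard_simplex path_connectedin_continuous_map_image [OF cont])
  moreover have "\<not> disjnt S (f ` standard_simplex p)"
    using fS by (auto simp: disjnt_def)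
  ultimately have "f ` standard_simplex p \<subseteq> S"
    using path_components_of_maximal[OF S] by blast
  then show ?thesis using f by (simp add: singular_simplex_subtopology)
qed

lemma simplex_comp:
  assumes f: "singular_simplex p X f"
  shows "path_component_of_set X (f ee0) \<in> path_components_of X"
proof -
  have "f ee0 \<in> topspace X"
    using f ee0_in[of p] by (auto simp: singular_simplex_def continuous_map_def)
  then show ?thesis by (simp add: path_component_in_path_components_of)
qed

lemma simplex_comp_in:
  assumes f: "singular_simplex p X f"
  shows "f ee0 \<in> path_component_of_set X (f ee0)"
proof -
  have "f ee0 \<in> topspace X"
    using f ee0_in[of p] by (auto simp: singular_simplex_def continuous_map_def)
  then show ?thesis by (simp add: path_component_of_refl)
qed

lemma cproj_0 [simp]: "cproj S 0 = 0"
  by (simp add: cproj_def)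
lemma cproj_add: "cproj S (a + b) = cproj S a + cproj S b"
  by (simp add: cproj_def frag_extend_add)
lemma cproj_diff: "cproj S (a - b) = cproj S a - cproj S b"
  by (simp add: cproj_def frag_extend_diff)
lemma cproj_minus: "cproj S (- a) = - cproj S a"
  by (simp add: cproj_def frag_extend_minus)
lemma cproj_sum: "finite I \<Longrightarrow> cproj S (sum g I) = (\<Sum>i\<in>I. cproj S (g i))"
  by (simp add: cproj_def frag_extend_sum o_def)

lemma cproj_chain:
  assumes c: "singular_chain p X c" and S: "S \<in> path_components_of X"
  shows "singular_chain p (subtopology X S) (cproj S c)"
  unfolding cproj_def
proof (rule singular_chain_extend)
  fix f assume "f \<in> Poly_Mapping.keys c"
  then have f: "singular_simplex p X f" using c by (auto simp: singular_chain_def)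
  show "singular_chain p (subtopology X S) (if f ee0 \<in> S then frag_of f else 0)"
    using simplex_in_comp[OF f S] by (simp add: singular_chain_of)
qed

lemma cproj_sub:
  assumes c: "singular_chain p (subtopology X S) c" and S: "S \<in> path_components_of X"
    and T: "T \<in> path_components_of X"
  shows "cproj T c = (if T = S then c else 0)"
proof (cases "T = S")
  case True
  have "cproj T c = frag_extend frag_of c"
    unfolding cproj_def
  proof (rule frag_extend_eq)
    fix f assume "f \<in> Poly_Mapping.keys c"
    then have "f ` standard_simplex p \<subseteq> S" using c by (auto simp: singular_chain_subtopology)
    then show "(if f ee0 \<in> T then frag_of f else 0) = frag_of f" using True by auto
  qed
  then show ?thesis using True frag_expansion[of c] by simp
next
  case False
  have "cproj T c = 0"
    unfolding cproj_def
  proof (rule frag_extend_eq_0)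
    fix f assume "f \<in> Poly_Mapping.keys c"
    then have "f ` standard_simplex p \<subseteq> S" using c by (auto simp: singular_chain_subtopology)
    then have "f ee0 \<in> S" by auto
    then have "f ee0 \<notin> T" using path_components_of_disjoint[OF S T] False by (auto simp: disjnt_def)
    then show "(if f ee0 \<in> T then frag_of f else 0) = 0" by simp
  qed
  then show ?thesis using False by simp
qed

lemma cproj_nonzero:
  assumes c: "singular_chain p X c" and S: "S \<in> path_components_of X" and ne: "cproj S c \<noteq> 0"
  shows "S \<in> (\<lambda>f. path_component_of_set X (f ee0)) ` Poly_Mapping.keys c"
proof (rule ccontr)
  assume nS: "S \<notin> (\<lambda>f. path_component_of_set X (f ee0)) ` Poly_Mapping.keys c"
  have "cproj S c = 0"
    unfolding cproj_def
  proof (rule frag_extend_eq_0)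
    fix f assume fk: "f \<in> Poly_Mapping.keys c"
    have "f ee0 \<notin> S"
    proof
      assume "f ee0 \<in> S"
      then have "S = path_component_of_set X (f ee0)" using comp_eq[OF S] by blast
      then show False using nS fk by blast
    qed
    then show "(if f ee0 \<in> S then frag_of f else 0) = 0" by simp
  qed
  then show False using ne by simp
qed

lemma cproj_finite:
  assumes c: "singular_chain p X c"
  shows "finite {S \<in> path_components_of X. cproj S c \<noteq> 0}"
  by (rule finite_subset[of _ "(\<lambda>f. path_component_of_set X (f ee0)) ` Poly_Mapping.keys c"])
     (use cproj_nonzero[OF c] in auto)

lemma frag_extend_fun_add:
  "frag_extend (\<lambda>f. g f + h f) c = frag_extend g c + frag_extend h c"
proof -
  have "Poly_Mapping.keys c \<subseteq> UNIV" by simp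
  then show ?thesis
  proof (induction c rule: frag_induction)
    case (diff a b) then show ?case by (simp add: frag_extend_diff)
  qed auto
qed

lemma frag_extend_fun_sum:
  "finite F \<Longrightarrow> frag_extend (\<lambda>f. \<Sum>S\<in>F. g S f) c = (\<Sum>S\<in>F. frag_extend (g S) c)"
  by (induction F rule: finite_induct) (simp_all add: frag_extend_fun_add frag_extend_eq_0)

lemma cproj_decomp:
  assumes c: "singular_chain p X c" and F: "finite F" "F \<subseteq> path_components_of X"
    and cov: "\<And>f. f \<in> Poly_Mapping.keys c \<Longrightarrow> path_component_of_set X (f ee0) \<in> F"
  shows "(\<Sum>S\<in>F. cproj S c) = c"
proof -
  have "(\<Sum>S\<in>F. cproj S c) = frag_extend (\<lambda>f. \<Sum>S\<in>F. (if f ee0 \<in> S then frag_of f else 0)) c"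
    unfolding cproj_def by (rule frag_extend_fun_sum[OF F(1), symmetric])
  also have "\<dots> = frag_extend frag_of c"
  proof (rule frag_extend_eq)
    fix f assume fk: "f \<in> Poly_Mapping.keys c"
    have "(\<Sum>S\<in>F. (if f ee0 \<in> S then frag_of f else 0))
        = (\<Sum>S\<in>F. (if S = path_component_of_set X (f ee0) then frag_of f else 0))"
    proof (rule sum.cong)
      fix S assume "S \<in> F"
      then have S: "S \<in> path_components_of X" using F by blast
      have fs: "singular_simplex p X f" using fk c by (auto simp: singular_chain_def)
      show "(if f ee0 \<in> S then frag_of f else 0) = (if S = path_component_of_set X (f ee0) then frag_of f else 0)"
      proof (cases "f ee0 \<in> S")
        case True
        then have "S = path_component_of_set X (f ee0)" by (rule comp_eq[OF S])
        then show ?thesis using True by simp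
      next
        case False
        then have "S \<noteq> path_component_of_set X (f ee0)" using simplex_comp_in[OF fs] by blast
        then show ?thesis using False by simp
      qed
    qed simp
    also have "\<dots> = frag_of f"
      using cov[OF fk] F(1) by (simp add: sum.delta')
    finally show "(\<Sum>S\<in>F. (if f ee0 \<in> S then frag_of f else 0)) = frag_of f" .
  qed
  also have "\<dots> = c" by (simp flip: frag_expansion)
  finally show ?thesis .
qed

lemma qboundary_of [simp]: "qboundary tr m (frag_of f) = qboundary_simplex tr m f"
  by (simp add: qboundary_def)
lemma qboundary_0 [simp]: "qboundary tr m 0 = 0"
  by (simp add: qboundary_def)
lemma qboundary_add: "qboundary tr m (a + b) = qboundary tr m a + qboundary tr m b"
  by (simp add: qboundary_def frag_extend_add)
lemma qboundary_diff: "qboundary tr m (a - b) = qboundary tr m a - qboundary tr m b"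
  by (simp add: qboundary_def frag_extend_diff)
lemma qboundary_minus: "qboundary tr m (- a) = - qboundary tr m a"
  by (simp add: qboundary_def frag_extend_minus)
lemma qboundary_sum: "finite I \<Longrightarrow> qboundary tr m (sum g I) = (\<Sum>i\<in>I. qboundary tr m (g i))"
  by (simp add: qboundary_def frag_extend_sum o_def)

lemma qboundary_chain_sub:
  assumes q: "topological_quandle X tr" and S: "S \<in> path_components_of X"
    and c: "singular_chain m (subtopology X S) c"
  shows "singular_chain (m - 1) (subtopology X S) (qboundary tr m c)"
  unfolding qboundary_def
proof (rule singular_chain_extend)
  fix f assume "f \<in> Poly_Mapping.keys c"
  then have f: "singular_simplex m (subtopology X S) f" using c by (auto simp: singular_chain_def)
  show "singular_chain (m - 1) (subtopology X S) (qboundary_simplex tr m f)"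
    by (rule qboundary_simplex_chain[OF q S f])
qed

lemma qboundary_chain:
  assumes q: "topological_quandle X tr" and c: "singular_chain m X c"
  shows "singular_chain (m - 1) X (qboundary tr m c)"
  unfolding qboundary_def
proof (rule singular_chain_extend)
  fix f assume "f \<in> Poly_Mapping.keys c"
  then have f: "singular_simplex m X f" using c by (auto simp: singular_chain_def)
  have "singular_chain (m - 1) (subtopology X (path_component_of_set X (f ee0))) (qboundary_simplex tr m f)"
    by (rule qboundary_simplex_chain[OF q simplex_comp[OF f] simplex_in_comp[OF f simplex_comp[OF f] simplex_comp_in[OF f]]])
  then show "singular_chain (m - 1) X (qboundary_simplex tr m f)"
    by (simp add: singular_chain_subtopology)
qed

lemma cproj_qboundary:
  assumes q: "topological_quandle X tr" and c: "singular_chain m X c" and S: "S \<in> path_components_of X"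
  shows "qboundary tr m (cproj S c) = cproj S (qboundary tr m c)"
proof -
  have "Poly_Mapping.keys c \<subseteq> singular_simplex_set m X" using c by (simp add: singular_chain_def)
  then show ?thesis
  proof (induction c rule: frag_induction)
    case zero then show ?case by simp
  next
    case (diff a b) then show ?case by (simp add: cproj_diff qboundary_diff)
  next
    case (one f)
    then have f: "singular_simplex m X f" by simp
    let ?T = "path_component_of_set X (f ee0)"
    have T: "?T \<in> path_components_of X" by (rule simplex_comp[OF f])
    have fT: "singular_simplex m (subtopology X ?T) f"
      by (rule simplex_in_comp[OF f T simplex_comp_in[OF f]])
    have ch: "singular_chain (m - 1) (subtopology X ?T) (qboundary_simplex tr m f)"
      by (rule qboundary_simplex_chain[OF q T fT])
    have "cproj S (frag_of f) = (if S = ?T then frag_of f else 0)"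
      by (rule cproj_sub[of m X ?T "frag_of f", OF _ T S]) (simp add: singular_chain_of fT)
    moreover have "cproj S (qboundary_simplex tr m f) = (if S = ?T then qboundary_simplex tr m f else 0)"
      by (rule cproj_sub[OF ch T S])
    ultimately show ?case by simp
  qed
qed

definition msum :: "'x::ab_group_add set \<Rightarrow> 'x set \<Rightarrow> 'x set" where
  "msum A A' = {a + a' | a a'. a \<in> A \<and> a' \<in> A'}"

definition cq :: "'x::ab_group_add set \<Rightarrow> 'x set \<Rightarrow> 'x set monoid" where
  "cq B Z = \<lparr>carrier = {(\<lambda>b. b + z) ` B | z. z \<in> Z}, mult = msum, one = B\<rparr>"

definition addsub :: "'x::ab_group_add set \<Rightarrow> bool" where
  "addsub B \<longleftrightarrow> 0 \<in> B \<and> (\<forall>a\<in>B. \<forall>b\<in>B. a + b \<in> B) \<and> (\<forall>a\<in>B. - a \<in> B)"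

lemma addsub_diff: "addsub B \<Longrightarrow> a \<in> B \<Longrightarrow> b \<in> B \<Longrightarrow> a - b \<in> B"
  unfolding addsub_def by (metis diff_conv_add_uminus)

lemma addsub_sum: "addsub B \<Longrightarrow> (\<And>i. i \<in> I \<Longrightarrow> g i \<in> B) \<Longrightarrow> sum g I \<in> B"
proof (induction I rule: infinite_finite_induct)
  case (infinite A) then show ?case by (simp add: addsub_def)
next
  case empty then show ?case by (simp add: addsub_def)
next
  case (insert x F) then show ?case by (simp add: addsub_def)
qed

lemma msum_cosets:
  assumes B: "addsub B"
  shows "msum ((\<lambda>b. b + z) ` B) ((\<lambda>b. b + z') ` B) = (\<lambda>b. b + (z + z')) ` B"
proof
  show "msum ((\<lambda>b. b + z) ` B) ((\<lambda>b. b + z') ` B) \<subseteq> (\<lambda>b. b + (z + z')) ` B"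
  proof
    fix x assume "x \<in> msum ((\<lambda>b. b + z) ` B) ((\<lambda>b. b + z') ` B)"
    then obtain b b' where bb: "b \<in> B" "b' \<in> B" "x = (b + z) + (b' + z')"
      unfolding msum_def by blast
    then have "x = (b + b') + (z + z')" by (simp add: algebra_simps)
    moreover have "b + b' \<in> B" using B bb by (simp add: addsub_def)
    ultimately show "x \<in> (\<lambda>b. b + (z + z')) ` B" by blast
  qed
  show "(\<lambda>b. b + (z + z')) ` B \<subseteq> msum ((\<lambda>b. b + z) ` B) ((\<lambda>b. b + z') ` B)"
  proof
    fix x assume "x \<in> (\<lambda>b. b + (z + z')) ` B"
    then obtain b where b: "b \<in> B" "x = b + (z + z')" by blast
    have "x = (b + z) + (0 + z')" using b by (simp add: algebra_simps)
    moreover have "0 \<in> B" using B by (simp add: addsub_def)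
    ultimately show "x \<in> msum ((\<lambda>b. b + z) ` B) ((\<lambda>b. b + z') ` B)"
      unfolding msum_def using b by blast
  qed
qed

lemma coset_eq_iff:
  assumes B: "addsub B"
  shows "(\<lambda>b. b + z) ` B = (\<lambda>b. b + z') ` B \<longleftrightarrow> z - z' \<in> B"
proof
  assume eq: "(\<lambda>b. b + z) ` B = (\<lambda>b. b + z') ` B"
  have "0 \<in> B" using B by (simp add: addsub_def)
  then have "z \<in> (\<lambda>b. b + z) ` B" by force
  then have "z \<in> (\<lambda>b. b + z') ` B" using eq by simp
  then obtain b where "b \<in> B" "z = b + z'" by blast
  then show "z - z' \<in> B" by simp
next
  assume d: "z - z' \<in> B"
  show "(\<lambda>b. b + z) ` B = (\<lambda>b. b + z') ` B"
  proof (intro equalityI subsetI)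
    fix x assume "x \<in> (\<lambda>b. b + z) ` B"
    then obtain b where b: "b \<in> B" "x = b + z" by blast
    then have "x = (b + (z - z')) + z'" by simp
    moreover have "b + (z - z') \<in> B" using B b d by (simp add: addsub_def)
    ultimately show "x \<in> (\<lambda>b. b + z') ` B" by blast
  next
    fix x assume "x \<in> (\<lambda>b. b + z') ` B"
    then obtain b where b: "b \<in> B" "x = b + z'" by blast
    then have "x = (b - (z - z')) + z" by simp
    moreover have "b - (z - z') \<in> B" using B b d by (simp add: addsub_diff)
    ultimately show "x \<in> (\<lambda>b. b + z) ` B" by blast
  qed
qed

lemma coset_zero: "(\<lambda>b. b + 0) ` B = (B :: 'x::ab_group_add set)"
  by (simp add: image_ident)

lemma group_cq:
  assumes B: "addsub B" and Z: "addsub Z"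
  shows "group (cq B Z)"
proof (rule groupI)
  fix x y assume "x \<in> carrier (cq B Z)" "y \<in> carrier (cq B Z)"
  then obtain z z' where "z \<in> Z" "z' \<in> Z" "x = (\<lambda>b. b + z) ` B" "y = (\<lambda>b. b + z') ` B"
    by (auto simp: cq_def)
  moreover have "z + z' \<in> Z" using Z calculation by (simp add: addsub_def)
  ultimately show "x \<otimes>\<^bsub>cq B Z\<^esub> y \<in> carrier (cq B Z)"
    by (auto simp: cq_def msum_cosets[OF B])
next
  show "\<one>\<^bsub>cq B Z\<^esub> \<in> carrier (cq B Z)"
    using Z coset_zero[of B] unfolding cq_def addsub_def by (auto intro!: exI[of _ 0])
next
  fix x y w assume "x \<in> carrier (cq B Z)" "y \<in> carrier (cq B Z)" "w \<in> carrier (cq B Z)"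
  then obtain z z' z'' where "x = (\<lambda>b. b + z) ` B" "y = (\<lambda>b. b + z') ` B" "w = (\<lambda>b. b + z'') ` B"
    by (auto simp: cq_def)
  then show "x \<otimes>\<^bsub>cq B Z\<^esub> y \<otimes>\<^bsub>cq B Z\<^esub> w = x \<otimes>\<^bsub>cq B Z\<^esub> (y \<otimes>\<^bsub>cq B Z\<^esub> w)"
    by (simp add: cq_def msum_cosets[OF B] add.assoc)
next
  fix x assume "x \<in> carrier (cq B Z)"
  then obtain z where "x = (\<lambda>b. b + z) ` B" by (auto simp: cq_def)
  then show "\<one>\<^bsub>cq B Z\<^esub> \<otimes>\<^bsub>cq B Z\<^esub> x = x"
    using msum_cosets[OF B, of 0 z] by (simp add: cq_def)
next
  fix x assume "x \<in> carrier (cq B Z)"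
  then obtain z where z: "z \<in> Z" "x = (\<lambda>b. b + z) ` B" by (auto simp: cq_def)
  have "- z \<in> Z" using Z z by (simp add: addsub_def)
  then have "(\<lambda>b. b + - z) ` B \<in> carrier (cq B Z)" unfolding cq_def
    by (simp only: partial_object.simps mem_Collect_eq) blast
  moreover have "(\<lambda>b. b + - z) ` B \<otimes>\<^bsub>cq B Z\<^esub> x = \<one>\<^bsub>cq B Z\<^esub>"
    using msum_cosets[OF B, of "- z" z] z by (simp add: cq_def)
  ultimately show "\<exists>y\<in>carrier (cq B Z). y \<otimes>\<^bsub>cq B Z\<^esub> x = \<one>\<^bsub>cq B Z\<^esub>" by blast
qed

definition Zs :: "('a \<Rightarrow> 'a \<Rightarrow> 'a) \<Rightarrow> nat \<Rightarrow> 'a topology \<Rightarrow> 'a chain set" where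
  "Zs tr n Y = {c \<in> singular_chain_set n Y. qboundary tr n c = 0}"

lemma addsub_Zs: "addsub (Zs tr n Y)"
  by (auto simp: addsub_def Zs_def qboundary_add qboundary_minus singular_chain_add singular_chain_minus)

lemma addsub_B: "addsub (qboundary_set tr n Y)"
  unfolding addsub_def qboundary_set_def
proof (intro conjI ballI)
  show "0 \<in> qboundary tr (Suc n) ` singular_chain_set (Suc n) Y"
    by (rule image_eqI[of _ _ 0]) auto
next
  fix a b assume "a \<in> qboundary tr (Suc n) ` singular_chain_set (Suc n) Y"
    "b \<in> qboundary tr (Suc n) ` singular_chain_set (Suc n) Y"
  then obtain c d where "singular_chain (Suc n) Y c" "singular_chain (Suc n) Y d"
    "a = qboundary tr (Suc n) c" "b = qboundary tr (Suc n) d" by auto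
  then show "a + b \<in> qboundary tr (Suc n) ` singular_chain_set (Suc n) Y"
    by (intro image_eqI[of _ _ "c + d"]) (auto simp: qboundary_add singular_chain_add)
next
  fix a assume "a \<in> qboundary tr (Suc n) ` singular_chain_set (Suc n) Y"
  then obtain c where "singular_chain (Suc n) Y c" "a = qboundary tr (Suc n) c" by auto
  then show "- a \<in> qboundary tr (Suc n) ` singular_chain_set (Suc n) Y"
    by (intro image_eqI[of _ _ "- c"]) (auto simp: qboundary_minus singular_chain_minus)
qed

lemma subgroup_Zs: "subgroup (Zs tr n Y) (chain_group n Y)"
proof (rule group.subgroupI)
  show "group (chain_group n Y)" by simp
  show "Zs tr n Y \<subseteq> carrier (chain_group n Y)" by (auto simp: Zs_def)
  show "Zs tr n Y \<noteq> {}" by (auto simp: Zs_def intro!: exI[of _ 0])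
  fix a b assume a: "a \<in> Zs tr n Y" and b: "b \<in> Zs tr n Y"
  then show "inv\<^bsub>chain_group n Y\<^esub> a \<in> Zs tr n Y"
    using addsub_Zs[of tr n Y] by (simp add: Zs_def singular_chain_def addsub_def)
  show "a \<otimes>\<^bsub>chain_group n Y\<^esub> b \<in> Zs tr n Y"
    using addsub_Zs[of tr n Y] a b by (simp add: addsub_def)
qed

lemma qhomology_eq: "qhomology_group tr n Y = cq (qboundary_set tr n Y) (Zs tr n Y)"
proof -
  have carr: "carrier (qcycle_group tr n Y) = Zs tr n Y"
    unfolding qcycle_group_def Zs_def[symmetric]
    by (rule subgroup.carrier_subgroup_generated_subgroup[OF subgroup_Zs])
  have mult: "mult (qcycle_group tr n Y) = (+)"
    by (simp add: qcycle_group_def)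
  have "rcosets\<^bsub>qcycle_group tr n Y\<^esub> (qboundary_set tr n Y)
        = {(\<lambda>b. b + z) ` qboundary_set tr n Y | z. z \<in> Zs tr n Y}"
    unfolding RCOSETS_def r_coset_def carr mult by auto
  moreover have "set_mult (qcycle_group tr n Y) = msum"
    unfolding set_mult_def mult msum_def by (auto simp: fun_eq_iff)
  ultimately show ?thesis
    by (simp add: qhomology_group_def FactGroup_def cq_def)
qed

lemma proj_B:
  assumes q: "topological_quandle X tr" and S: "S \<in> path_components_of X"
  shows "cproj S ` qboundary_set tr n X = qboundary_set tr n (subtopology X S)"
proof (intro equalityI subsetI)
  fix x assume "x \<in> cproj S ` qboundary_set tr n X"
  then obtain d where d: "singular_chain (Suc n) X d" "x = cproj S (qboundary tr (Suc n) d)"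
    by (auto simp: qboundary_set_def)
  then have "x = qboundary tr (Suc n) (cproj S d)"
    using cproj_qboundary[OF q d(1) S] by simp
  moreover have "singular_chain (Suc n) (subtopology X S) (cproj S d)"
    by (rule cproj_chain[OF d(1) S])
  ultimately show "x \<in> qboundary_set tr n (subtopology X S)"
    by (auto simp: qboundary_set_def)
next
  fix x assume "x \<in> qboundary_set tr n (subtopology X S)"
  then obtain d where d: "singular_chain (Suc n) (subtopology X S) d" "x = qboundary tr (Suc n) d"
    by (auto simp: qboundary_set_def)
  have xc: "singular_chain n (subtopology X S) x"
    using qboundary_chain_sub[OF q S d(1)] d(2) by simp
  have "cproj S x = x" using cproj_sub[OF xc S S] by simp
  moreover have "x \<in> qboundary_set tr n X"
    using d by (auto simp: qboundary_set_def singular_chain_subtopology)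
  ultimately show "x \<in> cproj S ` qboundary_set tr n X" by (metis image_eqI)
qed

lemma proj_Z:
  assumes q: "topological_quandle X tr" and S: "S \<in> path_components_of X"
    and z: "z \<in> Zs tr n X"
  shows "cproj S z \<in> Zs tr n (subtopology X S)"
proof -
  have zc: "singular_chain n X z" and z0: "qboundary tr n z = 0" using z by (auto simp: Zs_def)
  show ?thesis
    using cproj_chain[OF zc S] cproj_qboundary[OF q zc S] z0 by (simp add: Zs_def)
qed

lemma sub_Z: "Zs tr n (subtopology X S) \<subseteq> Zs tr n X"
  by (auto simp: Zs_def singular_chain_subtopology)

lemma sub_B: "qboundary_set tr n (subtopology X S) \<subseteq> qboundary_set tr n X"
  by (auto simp: qboundary_set_def singular_chain_subtopology)

lemma proj_coset:
  assumes q: "topological_quandle X tr" and S: "S \<in> path_components_of X"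
  shows "cproj S ` ((\<lambda>b. b + z) ` qboundary_set tr n X)
       = (\<lambda>b. b + cproj S z) ` qboundary_set tr n (subtopology X S)"
proof -
  have "cproj S ` ((\<lambda>b. b + z) ` qboundary_set tr n X) = (\<lambda>b. b + cproj S z) ` (cproj S ` qboundary_set tr n X)"
    by (simp add: image_image cproj_add)
  then show ?thesis using proj_B[OF q S] by simp
qed

theorem main_iso:
  assumes q: "topological_quandle X tr"
  shows "(\<lambda>A. \<lambda>S\<in>path_components_of X. cproj S ` A)
     \<in> iso (cq (qboundary_set tr n X) (Zs tr n X))
            (sum_group (path_components_of X)
               (\<lambda>S. cq (qboundary_set tr n (subtopology X S)) (Zs tr n (subtopology X S))))"
proof -
  let ?U = "path_components_of X"
  let ?B = "\<lambda>S. qboundary_set tr n (subtopology X S)"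
  let ?Z = "\<lambda>S. Zs tr n (subtopology X S)"
  let ?G = "\<lambda>S. cq (?B S) (?Z S)"
  let ?BX = "qboundary_set tr n X"
  let ?ZX = "Zs tr n X"
  let ?\<Phi> = "\<lambda>A. \<lambda>S\<in>?U. cproj S ` A"
  have grp: "\<And>S. group (?G S)" by (rule group_cq[OF addsub_B addsub_Zs])
  have carrSG: "carrier (sum_group ?U ?G) = {x \<in> (\<Pi>\<^sub>E S\<in>?U. carrier (?G S)). finite {S \<in> ?U. x S \<noteq> ?B S}}"
  proof -
    have c0: "carrier (sum_group ?U ?G) = {x \<in> (\<Pi>\<^sub>E S\<in>?U. carrier (?G S)). finite {S \<in> ?U. x S \<noteq> \<one>\<^bsub>?G S\<^esub>}}"
      by (rule carrier_sum_group[OF grp])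
    have o: "\<And>S. \<one>\<^bsub>?G S\<^esub> = ?B S" by (simp add: cq_def)
    show ?thesis using c0 by (simp only: o)
  qed
  have carrX: "carrier (cq ?BX ?ZX) = {(\<lambda>b. b + z) ` ?BX | z. z \<in> ?ZX}"
    by (simp add: cq_def)
  have phi: "?\<Phi> ((\<lambda>b. b + z) ` ?BX) = (\<lambda>S\<in>?U. (\<lambda>b. b + cproj S z) ` ?B S)" for z
    using proj_coset[OF q] by (intro restrict_ext) auto
  have incarr: "?\<Phi> ((\<lambda>b. b + z) ` ?BX) \<in> carrier (sum_group ?U ?G)" if z: "z \<in> ?ZX" for z
  proof -
    have zc: "singular_chain n X z" using z by (simp add: Zs_def)
    have "(\<lambda>S\<in>?U. (\<lambda>b. b + cproj S z) ` ?B S) \<in> (\<Pi>\<^sub>E S\<in>?U. carrier (?G S))"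
      using proj_Z[OF q _ z] by (auto simp: cq_def)
    moreover have "finite {S \<in> ?U. (\<lambda>S\<in>?U. (\<lambda>b. b + cproj S z) ` ?B S) S \<noteq> ?B S}"
    proof (rule finite_subset[OF _ cproj_finite[OF zc]])
      show "{S \<in> ?U. (\<lambda>S\<in>?U. (\<lambda>b. b + cproj S z) ` ?B S) S \<noteq> ?B S} \<subseteq> {S \<in> ?U. cproj S z \<noteq> 0}"
        using coset_zero by force
    qed
    ultimately show ?thesis using phi carrSG by simp
  qed
  have hom: "?\<Phi> \<in> hom (cq ?BX ?ZX) (sum_group ?U ?G)"
  proof (rule homI)
    fix A assume "A \<in> carrier (cq ?BX ?ZX)"
    then obtain z where "z \<in> ?ZX" "A = (\<lambda>b. b + z) ` ?BX" using carrX by auto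
    then show "?\<Phi> A \<in> carrier (sum_group ?U ?G)" using incarr by simp
  next
    fix A A' assume "A \<in> carrier (cq ?BX ?ZX)" "A' \<in> carrier (cq ?BX ?ZX)"
    then obtain z z' where zz: "z \<in> ?ZX" "A = (\<lambda>b. b + z) ` ?BX" "z' \<in> ?ZX" "A' = (\<lambda>b. b + z') ` ?BX"
      using carrX by auto
    have "A \<otimes>\<^bsub>cq ?BX ?ZX\<^esub> A' = (\<lambda>b. b + (z + z')) ` ?BX"
      using zz msum_cosets[OF addsub_B] by (simp add: cq_def)
    then have "?\<Phi> (A \<otimes>\<^bsub>cq ?BX ?ZX\<^esub> A') = (\<lambda>S\<in>?U. (\<lambda>b. b + (cproj S z + cproj S z')) ` ?B S)"
      using phi by (simp add: cproj_add)
    also have "\<dots> = ?\<Phi> A \<otimes>\<^bsub>sum_group ?U ?G\<^esub> ?\<Phi> A'"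
      unfolding zz phi by (simp add: cq_def, intro restrict_ext, simp add: msum_cosets[OF addsub_B])
    finally show "?\<Phi> (A \<otimes>\<^bsub>cq ?BX ?ZX\<^esub> A') = ?\<Phi> A \<otimes>\<^bsub>sum_group ?U ?G\<^esub> ?\<Phi> A'" .
  qed
  have inj: "inj_on ?\<Phi> (carrier (cq ?BX ?ZX))"
  proof (rule inj_onI)
    fix A A' assume "A \<in> carrier (cq ?BX ?ZX)" "A' \<in> carrier (cq ?BX ?ZX)" and eq: "?\<Phi> A = ?\<Phi> A'"
    then obtain z z' where zz: "z \<in> ?ZX" "A = (\<lambda>b. b + z) ` ?BX" "z' \<in> ?ZX" "A' = (\<lambda>b. b + z') ` ?BX"
      using carrX by auto
    let ?w = "z - z'"
    have wc: "singular_chain n X ?w" using zz by (simp add: Zs_def singular_chain_diff)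
    have wS: "cproj S ?w \<in> ?BX" if S: "S \<in> ?U" for S
    proof -
      have "(\<lambda>b. b + cproj S z) ` ?B S = (\<lambda>b. b + cproj S z') ` ?B S"
        using fun_cong[OF eq, of S] zz phi S by simp
      then have "cproj S z - cproj S z' \<in> ?B S" using coset_eq_iff[OF addsub_B] by blast
      then show ?thesis using sub_B[of tr n X S] by (auto simp: cproj_diff)
    qed
    let ?F = "(\<lambda>f. path_component_of_set X (f ee0)) ` Poly_Mapping.keys ?w"
    have Fsub: "?F \<subseteq> ?U"
      using wc simplex_comp by (auto simp: singular_chain_def)
    have "(\<Sum>S\<in>?F. cproj S ?w) = ?w"
      by (rule cproj_decomp[OF wc]) (use Fsub in auto)
    moreover have "(\<Sum>S\<in>?F. cproj S ?w) \<in> ?BX"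
      by (rule addsub_sum[OF addsub_B]) (use Fsub wS in auto)
    ultimately have "?w \<in> ?BX" by simp
    then show "A = A'" using zz coset_eq_iff[OF addsub_B] by blast
  qed
  have surj: "?\<Phi> ` carrier (cq ?BX ?ZX) = carrier (sum_group ?U ?G)"
  proof (intro equalityI subsetI)
    fix y assume "y \<in> ?\<Phi> ` carrier (cq ?BX ?ZX)"
    then show "y \<in> carrier (sum_group ?U ?G)" using hom by (auto simp: hom_def)
  next
    fix x assume x: "x \<in> carrier (sum_group ?U ?G)"
    let ?F = "{S \<in> ?U. x S \<noteq> ?B S}"
    have finF: "finite ?F" and xP: "x \<in> (\<Pi>\<^sub>E S\<in>?U. carrier (?G S))" using x carrSG by auto
    have ex: "\<exists>w. w \<in> ?Z S \<and> x S = (\<lambda>b. b + w) ` ?B S" if "S \<in> ?U" for S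
      using xP that by (auto simp: cq_def PiE_iff)
    define w where "w S = (SOME w. w \<in> ?Z S \<and> x S = (\<lambda>b. b + w) ` ?B S)" for S
    have w: "w S \<in> ?Z S" "x S = (\<lambda>b. b + w S) ` ?B S" if "S \<in> ?U" for S
      using someI_ex[OF ex[OF that]] unfolding w_def by auto
    define z where "z = (\<Sum>S\<in>?F. w S)"
    have zZ: "z \<in> ?ZX"
      unfolding z_def by (rule addsub_sum[OF addsub_Zs]) (use w sub_Z in blast)
    have "?\<Phi> ((\<lambda>b. b + z) ` ?BX) = x"
    proof
      fix T show "?\<Phi> ((\<lambda>b. b + z) ` ?BX) T = x T"
      proof (cases "T \<in> ?U")
        case False then show ?thesis using xP phi by (simp add: PiE_def extensional_def)
      next
        case T: True
        have "cproj T z = (\<Sum>S\<in>?F. cproj T (w S))"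
          unfolding z_def by (rule cproj_sum[OF finF])
        also have "\<dots> = (\<Sum>S\<in>?F. if T = S then w S else 0)"
        proof (rule sum.cong)
          fix S assume "S \<in> ?F"
          then have S: "S \<in> ?U" by simp
          have "singular_chain n (subtopology X S) (w S)" using w(1)[OF S] by (simp add: Zs_def)
          then show "cproj T (w S) = (if T = S then w S else 0)" by (rule cproj_sub[OF _ S T])
        qed simp
        also have "\<dots> = (if T \<in> ?F then w T else 0)"
          using finF by (simp add: sum.delta)
        finally have cz: "cproj T z = (if T \<in> ?F then w T else 0)" .
        show ?thesis
        proof (cases "T \<in> ?F")
          case True then show ?thesis using cz phi w(2)[OF T] T by simp
        next
          case False then show ?thesis using cz phi T coset_zero by simp
        qed
      qed
    qed
    moreover have "(\<lambda>b. b + z) ` ?BX \<in> carrier (cq ?BX ?ZX)" unfolding carrX using zZ by blast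
    ultimately show "x \<in> ?\<Phi> ` carrier (cq ?BX ?ZX)" by (rule image_eqI[OF sym])
  qed
  show ?thesis using hom inj surj by (simp add: iso_def bij_betw_def)
qed

theorem mainTheorem6:
  fixes X :: "'a topology" and tr :: "'a \<Rightarrow> 'a \<Rightarrow> 'a" and n :: nat
  assumes "topological_quandle X tr"
  shows "qhomology_group tr n X \<cong>
           sum_group (path_components_of X) (\<lambda>C. qhomology_group tr n (subtopology X C))"
  unfolding qhomology_eq by (rule is_isoI[OF main_iso[OF assms]])

end
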